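(* Let $\mathcal{A}$ be an alternative $W^{*}$-factor, $\mathcal{B}$ an alternative complex $\ast$-algebra, and $\Phi:\mathcal{A}\to\mathcal{B}$ a bijection preserving product $ab+ba^{*}$ (resp. $ab-ba^{*}$). Let $p_{1}\in\mathcal{A}$ be a projection with $p_{1}\neq 1_{\mathcal{A}}$, $p_{2}=1_{\mathcal{A}}-p_{1}$, and $\mathcal{A}_{ij}=p_{i}\mathcal{A}p_{j}$. Then $\Phi(b_{12}+c_{21})=\Phi(b_{12})+\Phi(c_{21})$ for all $b_{12}\in\mathcal{A}_{12}$, $c_{21}\in\mathcal{A}_{21}$.
   Context: An alternative $W^{*}$-factor is a prime alternative $C^{*}$-algebra (complete normed alternative complex $\ast$-algebra with $\|a^{*}a\|=\|a\|^{2}$) that is a dual Banach space; it is unital. A projection is a nonzero self-adjoint idempotent. $\mathcal{A}_{ij}$ are the Peirce components with respect to $p_{1}$. $\Phi$ preserves product $ab+ba^{*}$ (resp. $ab-ba^{*}$) if $\Phi(ab+ba^{*})=\Phi(a)\Phi(b)+\Phi(b)\Phi(a)^{*}$ (resp. $\Phi(ab-ba^{*})=\Phi(a)\Phi(b)-\Phi(b)\Phi(a)^{*}$) for all $a,b\in\mathcal{A}$. *)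

theory Defs
  imports "HOL-Analysis.Analysis"
begin

text \<open>Complex scalar multiplication is carried explicitly as a parameter smul,
 since the library has no complex-vector-space type class; the multiplication
 mul is a separate (not necessarily associative) operation.\<close>

definition complex_vs :: "(complex \<Rightarrow> 'a::ab_group_add \<Rightarrow> 'a) \<Rightarrow> bool" where
  "complex_vs smul \<longleftrightarrow>
     (\<forall>c x y. smul c (x + y) = smul c x + smul c y) \<and>
     (\<forall>c d x. smul (c + d) x = smul c x + smul d x) \<and>
     (\<forall>c d x. smul (c * d) x = smul c (smul d x)) \<and>
     (\<forall>x. smul 1 x = x)"

definition complex_normed_vs :: "(complex \<Rightarrow> 'a::real_normed_vector \<Rightarrow> 'a) \<Rightarrow> bool" where
  "complex_normed_vs smul \<longleftrightarrow>
     complex_vs smul \<and>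
     (\<forall>r x. smul (complex_of_real r) x = scaleR r x) \<and>
     (\<forall>c x. norm (smul c x) = cmod c * norm x)"

definition alt_star_alg ::
  "(complex \<Rightarrow> 'a::ab_group_add \<Rightarrow> 'a) \<Rightarrow> ('a \<Rightarrow> 'a \<Rightarrow> 'a) \<Rightarrow> ('a \<Rightarrow> 'a) \<Rightarrow> bool" where
  "alt_star_alg smul mul star \<longleftrightarrow>
     complex_vs smul \<and>
     (\<forall>x y z. mul (x + y) z = mul x z + mul y z) \<and>
     (\<forall>x y z. mul x (y + z) = mul x y + mul x z) \<and>
     (\<forall>c x y. mul (smul c x) y = smul c (mul x y)) \<and>
     (\<forall>c x y. mul x (smul c y) = smul c (mul x y)) \<and>
     (\<forall>x y. mul (mul x x) y = mul x (mul x y)) \<and>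
     (\<forall>x y. mul (mul y x) x = mul y (mul x x)) \<and>
     (\<forall>x y. star (x + y) = star x + star y) \<and>
     (\<forall>c x. star (smul c x) = smul (cnj c) (star x)) \<and>
     (\<forall>x. star (star x) = x) \<and>
     (\<forall>x y. star (mul x y) = mul (star y) (star x))"

definition alt_Cstar ::
  "(complex \<Rightarrow> 'a::banach \<Rightarrow> 'a) \<Rightarrow> ('a \<Rightarrow> 'a \<Rightarrow> 'a) \<Rightarrow> ('a \<Rightarrow> 'a) \<Rightarrow> bool" where
  "alt_Cstar smul mul star \<longleftrightarrow>
     alt_star_alg smul mul star \<and> complex_normed_vs smul \<and>
     (\<forall>x y. norm (mul x y) \<le> norm x * norm y) \<and>
     (\<forall>x. norm (mul (star x) x) = (norm x)\<^sup>2)"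

definition alg_ideal ::
  "(complex \<Rightarrow> 'a::ab_group_add \<Rightarrow> 'a) \<Rightarrow> ('a \<Rightarrow> 'a \<Rightarrow> 'a) \<Rightarrow> 'a set \<Rightarrow> bool" where
  "alg_ideal smul mul I \<longleftrightarrow>
     0 \<in> I \<and> (\<forall>x\<in>I. \<forall>y\<in>I. x + y \<in> I) \<and> (\<forall>c. \<forall>x\<in>I. smul c x \<in> I) \<and>
     (\<forall>a. \<forall>x\<in>I. mul a x \<in> I \<and> mul x a \<in> I)"

definition prime_alg ::
  "(complex \<Rightarrow> 'a::ab_group_add \<Rightarrow> 'a) \<Rightarrow> ('a \<Rightarrow> 'a \<Rightarrow> 'a) \<Rightarrow> bool" where
  "prime_alg smul mul \<longleftrightarrow>
     (\<forall>I J. alg_ideal smul mul I \<and> alg_ideal smul mul J \<and>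
            (\<forall>x\<in>I. \<forall>y\<in>J. mul x y = 0) \<longrightarrow> I = {0} \<or> J = {0})"

text \<open>The Banach space A (complex scalar multiplication smul) is (isometrically
 isomorphic to) the dual of the complex normed space X (scalar multiplication smulX):
 the complex dual of X is the set of bounded functionals X \<rightarrow> \<complex> that are complex-linear.\<close>
definition is_dual_of ::
  "(complex \<Rightarrow> 'x::real_normed_vector \<Rightarrow> 'x) \<Rightarrow> (complex \<Rightarrow> 'a::real_normed_vector \<Rightarrow> 'a) \<Rightarrow> bool" where
  "is_dual_of smulX smul \<longleftrightarrow> complex_normed_vs smulX \<and>
     (\<exists>T :: 'a \<Rightarrow> ('x \<Rightarrow>\<^sub>L complex).
        bij_betw T UNIV {f. \<forall>c x. blinfun_apply f (smulX c x) = c * blinfun_apply f x} \<and>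
        (\<forall>a b. T (a + b) = T a + T b) \<and>
        (\<forall>c a x. blinfun_apply (T (smul c a)) x = c * blinfun_apply (T a) x) \<and>
        (\<forall>a. norm (T a) = norm a))"

definition alt_W_factor ::
  "(complex \<Rightarrow> 'x::real_normed_vector \<Rightarrow> 'x) \<Rightarrow> (complex \<Rightarrow> 'a::banach \<Rightarrow> 'a) \<Rightarrow>
   ('a \<Rightarrow> 'a \<Rightarrow> 'a) \<Rightarrow> ('a \<Rightarrow> 'a) \<Rightarrow> 'a \<Rightarrow> bool" where
  "alt_W_factor smulX smul mul star one \<longleftrightarrow>
     alt_Cstar smul mul star \<and> prime_alg smul mul \<and> is_dual_of smulX smul \<and>
     (\<forall>a. mul one a = a \<and> mul a one = a)"

definition is_projection :: "('a::zero \<Rightarrow> 'a \<Rightarrow> 'a) \<Rightarrow> ('a \<Rightarrow> 'a) \<Rightarrow> 'a \<Rightarrow> bool" where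
  "is_projection mul star p \<longleftrightarrow> p \<noteq> 0 \<and> star p = p \<and> mul p p = p"

definition peirce :: "('a \<Rightarrow> 'a \<Rightarrow> 'a) \<Rightarrow> 'a \<Rightarrow> 'a \<Rightarrow> 'a set" where
  "peirce mul p q = {mul (mul p a) q | a. True}"

end

theory Submission imports Defs begin

locale sa =
  fixes smul :: "complex \<Rightarrow> 'a::ab_group_add \<Rightarrow> 'a" and mul :: "'a \<Rightarrow> 'a \<Rightarrow> 'a"
    and star :: "'a \<Rightarrow> 'a" and one :: 'a and f :: 'a
  assumes alg: "alt_star_alg smul mul star"
    and unitl: "\<And>a. mul one a = a" and unitr: "\<And>a. mul a one = a"
    and sf: "star f = f" and ff: "mul f f = f"
begin

lemma dl: "mul (a+b) c = mul a c + mul b c" using alg unfolding alt_star_alg_def by (elim conjE allE) assumption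
lemma dr: "mul c (a+b) = mul c a + mul c b" using alg unfolding alt_star_alg_def by (elim conjE allE) assumption
lemma sl: "mul (smul k x) y = smul k (mul x y)" using alg unfolding alt_star_alg_def by (elim conjE allE) assumption
lemma sr: "mul x (smul k y) = smul k (mul x y)" using alg unfolding alt_star_alg_def by (elim conjE allE) assumption
lemma altl: "mul (mul x x) y = mul x (mul x y)" using alg unfolding alt_star_alg_def by (elim conjE allE) assumption
lemma altr: "mul (mul y x) x = mul y (mul x x)" using alg unfolding alt_star_alg_def by (elim conjE allE) assumption
lemma st_add: "star (x+y) = star x + star y" using alg unfolding alt_star_alg_def by (elim conjE allE) assumption
lemma st_smul: "star (smul k x) = smul (cnj k) (star x)" using alg unfolding alt_star_alg_def by (elim conjE allE) assumption
lemma st_st: "star (star x) = x" using alg unfolding alt_star_alg_def by (elim conjE allE) assumption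
lemma st_mul: "star (mul x y) = mul (star y) (star x)" using alg unfolding alt_star_alg_def by (elim conjE allE) assumption
lemma sm_add: "smul k (x+y) = smul k x + smul k y" using alg unfolding alt_star_alg_def complex_vs_def by (elim conjE allE) assumption
lemma sm_addc: "smul (k+d) x = smul k x + smul d x" using alg unfolding alt_star_alg_def complex_vs_def by (elim conjE allE) assumption
lemma sm_mult: "smul (k*d) x = smul k (smul d x)" using alg unfolding alt_star_alg_def complex_vs_def by (elim conjE allE) assumption
lemma sm_one: "smul 1 x = x" using alg unfolding alt_star_alg_def complex_vs_def by (elim conjE allE) assumption

lemma m0l[simp]: "mul 0 a = 0"
proof - have "mul (0+0) a = mul 0 a + mul 0 a" by (rule dl) then show ?thesis by simp qed
lemma m0r[simp]: "mul a 0 = 0"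
proof - have "mul a (0+0) = mul a 0 + mul a 0" by (rule dr) then show ?thesis by simp qed
lemma mnl: "mul (-a) b = - mul a b"
proof - have "mul (a + -a) b = mul a b + mul (-a) b" by (rule dl)
  then have "mul a b + mul (-a) b = 0" by simp then show ?thesis by (metis minus_unique) qed
lemma mnr: "mul b (-a) = - mul b a"
proof - have "mul b (a + -a) = mul b a + mul b (-a)" by (rule dr)
  then have "mul b a + mul b (-a) = 0" by simp then show ?thesis by (metis minus_unique) qed
lemma mdl: "mul (a-b) c = mul a c - mul b c" using dl[of a "-b" c] mnl[of b c] by simp
lemma mdr: "mul c (a-b) = mul c a - mul c b" using dr[of c a "-b"] mnr[of c b] by simp
lemma st0[simp]: "star 0 = 0"
proof - have "star (0+0) = star 0 + star 0" by (rule st_add) then show ?thesis by simp qed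
lemma stn: "star (-a) = - star a"
proof - have "star (a + -a) = star a + star (-a)" by (rule st_add)
  then have "star a + star (-a) = 0" by simp then show ?thesis by (metis minus_unique) qed
lemma std: "star (a-b) = star a - star b" using st_add[of a "-b"] stn[of b] by simp
lemma stone: "star one = one"
proof -
  have "mul (star one) a = a" for a
  proof - have "star (mul (star a) one) = mul (star one) a" by (simp add: st_mul st_st)
    then show ?thesis by (simp add: unitr st_st) qed
  from this[of one] show ?thesis by (simp add: unitr)
qed
lemma sm0[simp]: "smul k 0 = 0"
proof - have "smul k (0+0) = smul k 0 + smul k 0" by (rule sm_add) then show ?thesis by simp qed
lemma sm_cancel: assumes "smul k v = 0" "k \<noteq> 0" shows "v = 0"
proof -
  have "v = smul (inverse k * k) v" using assms(2) by (simp add: sm_one)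
  also have "\<dots> = 0" by (simp add: sm_mult assms(1))
  finally show ?thesis .
qed
lemma smneg: "smul (-k) v = - smul k v"
proof -
  have "smul (k + -k) v = smul k v + smul (-k) v" by (rule sm_addc)
  moreover have "smul 0 v = 0"
  proof - have "smul (0+0) v = smul 0 v + smul 0 v" by (rule sm_addc) then show ?thesis by simp qed
  ultimately have "smul k v + smul (-k) v = 0" by simp
  then show ?thesis by (metis minus_unique)
qed

lemma flex: "mul (mul x y) x = mul x (mul y x)"
proof -
  have "mul (mul (x+y) (x+y)) x = mul (x+y) (mul (x+y) x)" by (rule altl)
  then have "mul (mul x x) x + mul (mul y x) x + (mul (mul x y) x + mul (mul y y) x) =
     mul x (mul x x) + mul y (mul x x) + (mul x (mul y x) + mul y (mul y x))"
    by (simp add: dl dr add_ac)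
  then show ?thesis by (simp only: altl altr add_left_cancel add_right_cancel)
qed

lemma L1: "mul f (mul f z) = mul f z" using altl[of f z] ff by simp
lemma R1: "mul (mul z f) f = mul z f" using altr[of z f] ff by simp
lemma Lq: "mul (one - f) w = w - mul f w" by (simp add: mdl unitl)
lemma Rq: "mul w (one - f) = w - mul w f" by (simp add: mdr unitr)
lemma qf: "mul (one - f) (mul f w) = 0" by (simp add: Lq L1)
lemma fq: "mul f (mul (one - f) w) = 0" by (simp add: mdr L1 Lq)
lemma fzf: "mul f (mul (mul f z) f) = mul (mul f z) f"
  using flex[of f "mul f z"] by (simp add: L1)

lemma cls12: assumes "x \<in> peirce mul f (one - f)" shows "mul f x = x" "mul x f = 0"
proof -
  obtain a where x: "x = mul (mul f a) (one - f)" using assms unfolding peirce_def by blast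
  show "mul f x = x" unfolding x Rq by (simp add: mdr L1 fzf)
  show "mul x f = 0" unfolding x Rq by (simp add: mdl R1)
qed
lemma cls21: assumes "y \<in> peirce mul (one - f) f" shows "mul f y = 0" "mul y f = y"
proof -
  obtain a where y: "y = mul (mul (one - f) a) f" using assms unfolding peirce_def by blast
  show "mul f y = 0" unfolding y Lq by (simp add: mdl mdr fzf L1 flex[symmetric])
  show "mul y f = y" unfolding y Lq by (simp add: mdl R1)
qed

lemma decomp: "t = mul f (mul t f) + mul (one - f) (mul t f) + mul f (mul t (one - f)) + mul (one - f) (mul t (one - f))"
  by (simp add: Lq Rq)
end

locale phi = sa smul mul star one f for smul :: "complex \<Rightarrow> 'a::ab_group_add \<Rightarrow> 'a" and mul star one f +
  fixes smulB :: "complex \<Rightarrow> 'b::ab_group_add \<Rightarrow> 'b" and mulB starB and \<Phi> :: "'a \<Rightarrow> 'b"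
  assumes B: "alt_star_alg smulB mulB starB" and injP: "inj \<Phi>" and P0: "\<Phi> 0 = 0"
begin
lemma dlB: "mulB (a+b) c = mulB a c + mulB b c" using B unfolding alt_star_alg_def by (elim conjE allE) assumption
lemma drB: "mulB c (a+b) = mulB c a + mulB c b" using B unfolding alt_star_alg_def by (elim conjE allE) assumption
lemma stB: "starB (x+y) = starB x + starB y" using B unfolding alt_star_alg_def by (elim conjE allE) assumption

lemma keyM: assumes pm: "\<forall>a b. \<Phi> (mul a b - mul b (star a)) = mulB (\<Phi> a) (\<Phi> b) - mulB (\<Phi> b) (starB (\<Phi> a))"
  and T: "\<Phi> t = \<Phi> x + \<Phi> y"
  shows "\<Phi> (mul t b - mul b (star t)) = \<Phi> (mul x b - mul b (star x)) + \<Phi> (mul y b - mul b (star y))"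
    "\<Phi> (mul b t - mul t (star b)) = \<Phi> (mul b x - mul x (star b)) + \<Phi> (mul b y - mul y (star b))"
  by (simp_all only: pm[rule_format] T) (simp_all add: dlB drB stB algebra_simps)
lemma keyP: assumes pp: "\<forall>a b. \<Phi> (mul a b + mul b (star a)) = mulB (\<Phi> a) (\<Phi> b) + mulB (\<Phi> b) (starB (\<Phi> a))"
  and T: "\<Phi> t = \<Phi> x + \<Phi> y"
  shows "\<Phi> (mul t b + mul b (star t)) = \<Phi> (mul x b + mul b (star x)) + \<Phi> (mul y b + mul b (star y))"
    "\<Phi> (mul b t + mul t (star b)) = \<Phi> (mul b x + mul x (star b)) + \<Phi> (mul b y + mul y (star b))"
  by (simp_all only: pp[rule_format] T) (simp_all add: dlB drB stB algebra_simps)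

lemma partM: assumes pm: "\<forall>a b. \<Phi> (mul a b - mul b (star a)) = mulB (\<Phi> a) (\<Phi> b) - mulB (\<Phi> b) (starB (\<Phi> a))"
  and x1: "mul f x = x" and x2: "mul x f = 0" and y1: "mul f y = 0" and y2: "mul y f = y"
  and T: "\<Phi> t = \<Phi> x + \<Phi> y"
  shows "mul (one - f) (mul t f) = y" "star (mul f (mul t f)) = mul f (mul t f)"
proof -
  have fxs: "mul f (star x) = 0" using st_mul[of x f] x2 sf by simp
  have fys: "mul f (star y) = star y" using st_mul[of y f] y2 sf by simp
  have ysf: "mul (star y) f = 0" using st_mul[of f y] y1 sf by simp
  have "\<Phi> (mul t f - mul f (star t)) = \<Phi> (mul y f - mul f (star y))"
    using keyM(1)[OF pm T, of f] x2 fxs P0 by simp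
  then have E: "mul t f - mul f (star t) = y - star y" using injP fys y2 by (simp add: inj_eq)
  have "mul (one - f) (mul t f - mul f (star t)) = mul (one - f) (y - star y)" using E by simp
  then show i: "mul (one - f) (mul t f) = y" by (simp only: mdr qf) (simp add: Lq y1 fys)
  have "mul (mul t f - mul f (star t)) f = mul (y - star y) f" using E by simp
  then have "mul t f - mul (mul f (star t)) f = y" by (simp add: mdl R1 y2 ysf)
  moreover have "mul t f = mul f (mul t f) + mul (one - f) (mul t f)" by (simp add: Lq)
  ultimately have "mul f (mul t f) = mul (mul f (star t)) f" using i by (simp add: algebra_simps)
  moreover have "star (mul f (mul t f)) = mul (mul f (star t)) f" by (simp add: st_mul sf)
  ultimately show "star (mul f (mul t f)) = mul f (mul t f)" by simp
qed

lemma zeroM: assumes pm: "\<forall>a b. \<Phi> (mul a b - mul b (star a)) = mulB (\<Phi> a) (\<Phi> b) - mulB (\<Phi> b) (starB (\<Phi> a))"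
  and x1: "mul f x = x" and x2: "mul x f = 0" and y1: "mul f y = 0" and y2: "mul y f = y"
  and T: "\<Phi> t = \<Phi> x + \<Phi> y"
  shows "mul f (mul t f) = 0"
proof -
  define a where "a = smul \<i> f"
  define s where "s = mul a t - mul t (star a)"
  have s_eq: "s = smul \<i> (mul f t) + smul \<i> (mul t f)"
    unfolding s_def a_def by (simp add: st_smul sf sl sr smneg mnr)
  have "\<Phi> s = \<Phi> (smul \<i> x) + \<Phi> (smul \<i> y)"
    using keyM(2)[OF pm T, of a] unfolding s_def[symmetric] unfolding a_def
    by (simp add: st_smul sf sl sr smneg mnr x1 x2 y1 y2 s_eq)
  from partM(2)[OF pm _ _ _ _ this] have sfs: "star (mul f (mul s f)) = mul f (mul s f)"
    by (simp add: sl sr x1 x2 y1 y2)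
  define u where "u = mul f (mul t f)"
  have fsf: "mul f (mul s f) = smul (2*\<i>) u"
  proof -
    have "mul f (mul s f) = smul \<i> (mul f (mul (mul f t) f)) + smul \<i> (mul f (mul (mul t f) f))"
      unfolding s_eq by (simp add: dl dr sl sr)
    also have "\<dots> = smul \<i> u + smul \<i> u" unfolding u_def by (simp add: flex L1 R1)
    also have "\<dots> = smul (2*\<i>) u" using sm_addc[of \<i> \<i> u] by simp
    finally show ?thesis .
  qed
  have su: "star u = u" using partM(2)[OF pm x1 x2 y1 y2 T] unfolding u_def .
  have "smul (-(2*\<i>)) u = smul (2*\<i>) u" using sfs fsf su by (simp add: st_smul)
  then have h: "- smul (2*\<i>) u = smul (2*\<i>) u" by (simp add: smneg)
  have "smul (2*\<i>) u + smul (2*\<i>) u = smul (2*\<i>) u + - smul (2*\<i>) u" by (subst h) (rule refl)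
  then have "smul (2*\<i>) u + smul (2*\<i>) u = 0" by simp
  then have "smul (4*\<i>) u = 0" using sm_addc[of "2*\<i>" "2*\<i>" u] by simp
  then have "u = 0" by (rule sm_cancel) simp
  then show ?thesis unfolding u_def .
qed

lemma partP: assumes pp: "\<forall>a b. \<Phi> (mul a b + mul b (star a)) = mulB (\<Phi> a) (\<Phi> b) + mulB (\<Phi> b) (starB (\<Phi> a))"
  and x1: "mul f x = x" and x2: "mul x f = 0" and y1: "mul f y = 0" and y2: "mul y f = y"
  and T: "\<Phi> t = \<Phi> x + \<Phi> y"
  shows "mul (one - f) (mul t f) = y" "mul f (mul t f) = 0"
proof -
  have fxs: "mul f (star x) = 0" using st_mul[of x f] x2 sf by simp
  have fys: "mul f (star y) = star y" using st_mul[of y f] y2 sf by simp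
  have "\<Phi> (mul t f + mul f (star t)) = \<Phi> (mul y f + mul f (star y))"
    using keyP(1)[OF pp T, of f] x2 fxs P0 by simp
  then have E: "mul t f + mul f (star t) = y + star y" using injP fys y2 by (simp add: inj_eq)
  have "mul (one - f) (mul t f + mul f (star t)) = mul (one - f) (y + star y)" using E by simp
  then show "mul (one - f) (mul t f) = y" by (simp only: dr qf) (simp add: Lq y1 fys)
  have "\<Phi> (mul f t + mul t (star f)) = \<Phi> t"
    using keyP(2)[OF pp T, of f] T by (simp add: sf x1 x2 y1 y2)
  then have "mul f t + mul t f = t" using injP sf by (simp add: inj_eq)
  then have "mul f (mul f t + mul t f) = mul f t" by simp
  then show "mul f (mul t f) = 0" by (simp add: dr L1)
qed
end

lemma B0:
  assumes B: "alt_star_alg smulB mulB starB"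
  shows "mulB 0 a = 0" "mulB a 0 = 0" "starB 0 = 0"
proof -
  have "mulB (0+0) a = mulB 0 a + mulB 0 a" using B unfolding alt_star_alg_def by (elim conjE allE) assumption
  then show "mulB 0 a = 0" by simp
  have "mulB a (0+0) = mulB a 0 + mulB a 0" using B unfolding alt_star_alg_def by (elim conjE allE) assumption
  then show "mulB a 0 = 0" by simp
  have "starB (0+0) = starB 0 + starB 0" using B unfolding alt_star_alg_def by (elim conjE allE) assumption
  then show "starB 0 = 0" by simp
qed

theorem claim2p2:
  fixes smulX :: "complex \<Rightarrow> 'x::real_normed_vector \<Rightarrow> 'x"
    and smul :: "complex \<Rightarrow> 'a::banach \<Rightarrow> 'a"
    and mul :: "'a \<Rightarrow> 'a \<Rightarrow> 'a" and star :: "'a \<Rightarrow> 'a" and one :: 'a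
    and smulB :: "complex \<Rightarrow> 'b::ab_group_add \<Rightarrow> 'b"
    and mulB :: "'b \<Rightarrow> 'b \<Rightarrow> 'b" and starB :: "'b \<Rightarrow> 'b"
    and \<Phi> :: "'a \<Rightarrow> 'b" and p1 :: 'a
  assumes A: "alt_W_factor smulX smul mul star one"
    and B: "alt_star_alg smulB mulB starB"
    and bij: "bij \<Phi>"
    and pres: "(\<forall>a b. \<Phi> (mul a b + mul b (star a)) = mulB (\<Phi> a) (\<Phi> b) + mulB (\<Phi> b) (starB (\<Phi> a)))
             \<or> (\<forall>a b. \<Phi> (mul a b - mul b (star a)) = mulB (\<Phi> a) (\<Phi> b) - mulB (\<Phi> b) (starB (\<Phi> a)))"
    and p1: "is_projection mul star p1" and p1ne: "p1 \<noteq> one"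
    and b12: "b12 \<in> peirce mul p1 (one - p1)"
    and c21: "c21 \<in> peirce mul (one - p1) p1"
  shows "\<Phi> (b12 + c21) = \<Phi> b12 + \<Phi> c21"
proof -
  have alg: "alt_star_alg smul mul star" and un: "\<forall>a. mul one a = a \<and> mul a one = a"
    using A unfolding alt_W_factor_def alt_Cstar_def by auto
  have sp: "star p1 = p1" and pp: "mul p1 p1 = p1" using p1 unfolding is_projection_def by auto
  interpret E: sa smul mul star one p1
    by unfold_locales (use alg un sp pp in auto)
  have sq: "star (one - p1) = one - p1" by (simp add: E.std E.stone sp)
  have qq: "mul (one - p1) (one - p1) = one - p1" by (simp add: E.Lq E.Rq pp)
  have P0: "\<Phi> 0 = 0"
  proof -
    obtain z where z: "\<Phi> z = 0" using bij by (metis bij_pointE)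
    from pres show ?thesis
    proof
      assume h: "\<forall>a b. \<Phi> (mul a b + mul b (star a)) = mulB (\<Phi> a) (\<Phi> b) + mulB (\<Phi> b) (starB (\<Phi> a))"
      show ?thesis using h[rule_format, of z 0] z by (simp add: B0[OF B])
    next
      assume h: "\<forall>a b. \<Phi> (mul a b - mul b (star a)) = mulB (\<Phi> a) (\<Phi> b) - mulB (\<Phi> b) (starB (\<Phi> a))"
      show ?thesis using h[rule_format, of z 0] z by (simp add: B0[OF B])
    qed
  qed
  have injP: "inj \<Phi>" using bij bij_is_inj by blast
  interpret PE: phi smul mul star one p1 smulB mulB starB \<Phi>
    by unfold_locales (use B injP P0 in auto)
  interpret Q: sa smul mul star one "one - p1"
    by unfold_locales (use alg un sq qq in auto)
  interpret PQ: phi smul mul star one "one - p1" smulB mulB starB \<Phi>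
    by unfold_locales (use B injP P0 in auto)
  note x = E.cls12[OF b12] and y = E.cls21[OF c21]
  have xq: "mul (one - p1) b12 = 0" "mul b12 (one - p1) = b12" using x by (simp_all add: E.Lq E.Rq)
  have yq: "mul (one - p1) c21 = c21" "mul c21 (one - p1) = 0" using y by (simp_all add: E.Lq E.Rq)
  define t where "t = inv \<Phi> (\<Phi> b12 + \<Phi> c21)"
  have T: "\<Phi> t = \<Phi> b12 + \<Phi> c21" unfolding t_def using bij by (simp add: bij_is_surj surj_f_inv_f)
  have TQ: "\<Phi> t = \<Phi> c21 + \<Phi> b12" using T by (simp add: add.commute)
  have parts: "mul (one - p1) (mul t p1) = c21 \<and> mul p1 (mul t p1) = 0 \<and>
      mul p1 (mul t (one - p1)) = b12 \<and> mul (one - p1) (mul t (one - p1)) = 0"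
    using pres
  proof
    assume h: "\<forall>a b. \<Phi> (mul a b + mul b (star a)) = mulB (\<Phi> a) (\<Phi> b) + mulB (\<Phi> b) (starB (\<Phi> a))"
    show ?thesis using PE.partP[OF h x y T] PQ.partP[OF h yq xq TQ] by simp
  next
    assume h: "\<forall>a b. \<Phi> (mul a b - mul b (star a)) = mulB (\<Phi> a) (\<Phi> b) - mulB (\<Phi> b) (starB (\<Phi> a))"
    show ?thesis using PE.partM(1)[OF h x y T] PE.zeroM[OF h x y T]
        PQ.partM(1)[OF h yq xq TQ] PQ.zeroM[OF h yq xq TQ] by simp
  qed
  have "t = b12 + c21" using E.decomp[of t] parts by (simp add: add.commute)
  then show ?thesis using T by simp
qed

end
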